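(* Let $p\ge 2$, $0<T\le\infty$. (Direct part.) Let $(a_i(t))_{i\ge0}$, $t\in[0,T)$, be a solution of $$\dot a_i=a_i\Big(\prod_{j=1}^{p}a_{i+j}-\prod_{j=1}^{p}a_{i-j}\Big),\quad i\in\mathbb Z_+,\ a_l=0\ (l<0),$$ with $a_i(t)\neq 0$ and $(a_i(t))_i\in l_\infty$, and set $b_i(t)=a_i(t)a_{i+1}(t)\cdots a_{i+p-1}(t)$ (the Miura map; $(b_i)$ then solves $\dot b_i=b_i(\sum_{j=1}^p b_{i+j}-\sum_{j=1}^p b_{i-j})$, $b_l=0$ for $l<0$). Let $S^l_k(t)=(L1(t)^k)_{l-1,0}$ and $\tilde S^l_k(t)=(L2(t)^k)_{0,l-1}$, $l=1,\dots,p$, $k\ge 0$, be the moments of the matrices $L1(t)$ built from $(a_i(t))$ and $L2(t)$ built from $(b_i(t))$. Then $$\frac{S^l_k(t)}{S^l_{l-1}(t)}=\tilde S^l_k(t),\qquad l=1,\dots,p,\ k\in\mathbb Z_+.$$ (Converse part.) Let $(b_i(t))_{i\ge0}$, $t\in[0,T)$, be a solution of $\dot b_i=b_i(\sum_{j=1}^p b_{i+j}-\sum_{j=1}^p b_{i-j})$, $b_l=0$ for $l<0$, with $b_i(t)\ne 0$, $(b_i(t))_i\in l_\infty$. Choose nonzero $a_0(0),\dots,a_{p-2}(0)\in\mathbb C$ and define $a_i(t)=a_i(0)\exp\big(\int_0^t b_{i+1}(\tau)d\tau\big)$ for $i=0,\dots,p-2$ and recursively $a_i(t)=b_{i-p+1}(t)/(a_{i-p+1}(t)\cdots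 a_{i-1}(t))$ for $i\ge p-1$. Then, with $S^l_k(t)$ the moments of $L1(t)$ built from these $a_i(t)$ and $\tilde S^l_k(t)$ those of $L2(t)$ built from $b_i(t)$, one has for all $k\in\mathbb Z_+$ $$S^1_k(t)=\tilde S^1_k(t),\qquad S^l_k(t)=a_0(0)\cdots a_{l-2}(0)\,\exp\Big(\int_0^t\big(\tilde S^l_{l+p}(\tau)-\tilde S^1_{p+1}(\tau)\big)d\tau\Big)\tilde S^l_k(t),\quad l=2,\dots,p,$$ and $S(t)=(S^1_k(t),\dots,S^p_k(t))_k$ is the moment sequence of the matrix $L1(t)$ associated with a solution of the first ($a$-)system.
   Context: For a sequence $(a_i)$, $L1$ is the infinite matrix (indices $\ge0$) with $(L1)_{i,i+p}=1$, $(L1)_{i+1,i}=a_i$ for $i\ge0$, other entries zero. For $(b_i)$, $L2$ is the infinite matrix with $(L2)_{i,i+1}=1$, $(L2)_{i+p,i}=b_i$ for $i\ge 0$, other entries zero. Matrix powers are ordinary products of these banded matrices. *)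

theory Defs
  imports "HOL-Analysis.Analysis"
begin

text \<open>Infinite matrices indexed by nat x nat, with complex entries.
  The product is the ordinary one; it is a finite sum for row-finite matrices
  (such as the banded matrices L1, L2 and their powers).\<close>

type_synonym imat = "nat \<Rightarrow> nat \<Rightarrow> complex"

definition imult :: "imat \<Rightarrow> imat \<Rightarrow> imat" where
  "imult A B = (\<lambda>i j. \<Sum>m\<in>{m. A i m \<noteq> 0}. A i m * B m j)"

definition iid :: imat where
  "iid = (\<lambda>i j. if i = j then 1 else 0)"

fun ipow :: "imat \<Rightarrow> nat \<Rightarrow> imat" where
  "ipow A 0 = iid"
| "ipow A (Suc k) = imult (ipow A k) A"

definition L1 :: "nat \<Rightarrow> (nat \<Rightarrow> complex) \<Rightarrow> imat" where
  "L1 p a = (\<lambda>i j. (if j = i + p then 1 else 0) + (if i = j + 1 then a j else 0))"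

definition L2 :: "nat \<Rightarrow> (nat \<Rightarrow> complex) \<Rightarrow> imat" where
  "L2 p b = (\<lambda>i j. (if j = i + 1 then 1 else 0) + (if i = j + p then b j else 0))"

definition S1 :: "nat \<Rightarrow> (nat \<Rightarrow> complex) \<Rightarrow> nat \<Rightarrow> nat \<Rightarrow> complex" where
  "S1 p a l k = ipow (L1 p a) k (l - 1) 0"

definition S2 :: "nat \<Rightarrow> (nat \<Rightarrow> complex) \<Rightarrow> nat \<Rightarrow> nat \<Rightarrow> complex" where
  "S2 p b l k = ipow (L2 p b) k 0 (l - 1)"

definition ext0 :: "(nat \<Rightarrow> complex) \<Rightarrow> int \<Rightarrow> complex" where
  "ext0 a i = (if i < 0 then 0 else a (nat i))"

definition tdom :: "ereal \<Rightarrow> real set" where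
  "tdom T = {t. 0 \<le> t \<and> ereal t < T}"

definition a_solution :: "nat \<Rightarrow> ereal \<Rightarrow> (nat \<Rightarrow> real \<Rightarrow> complex) \<Rightarrow> bool" where
  "a_solution p T a \<longleftrightarrow> (\<forall>i. \<forall>t\<in>tdom T.
     (a i has_vector_derivative
        a i t * ((\<Prod>j=1..p. a (i + j) t) - (\<Prod>j=1..p. ext0 (\<lambda>n. a n t) (int i - int j))))
     (at t within tdom T))"

definition b_solution :: "nat \<Rightarrow> ereal \<Rightarrow> (nat \<Rightarrow> real \<Rightarrow> complex) \<Rightarrow> bool" where
  "b_solution p T b \<longleftrightarrow> (\<forall>i. \<forall>t\<in>tdom T.
     (b i has_vector_derivative
        b i t * ((\<Sum>j=1..p. b (i + j) t) - (\<Sum>j=1..p. ext0 (\<lambda>n. b n t) (int i - int j))))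
     (at t within tdom T))"

definition nonzero_linf :: "ereal \<Rightarrow> (nat \<Rightarrow> real \<Rightarrow> complex) \<Rightarrow> bool" where
  "nonzero_linf T a \<longleftrightarrow> (\<forall>t\<in>tdom T. (\<forall>i. a i t \<noteq> 0) \<and> bounded (range (\<lambda>i. a i t)))"

end

theory Submission
  imports Defs
begin


declare ipow.simps(2)[simp del]

lemma sum_supp:
  assumes "finite {m. f m \<noteq> 0}" "finite G" "\<And>m. m \<notin> G \<Longrightarrow> g m = 0"
  shows "(\<Sum>m\<in>{m. f m \<noteq> 0}. f m * g m) = (\<Sum>m\<in>G. f m * (g m :: complex))"
proof -
  let ?U = "{m. f m \<noteq> 0} \<union> G"
  have "(\<Sum>m\<in>{m. f m \<noteq> 0}. f m * g m) = (\<Sum>m\<in>?U. f m * g m)"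
    by (rule sum.mono_neutral_left) (use assms in auto)
  also have "\<dots> = (\<Sum>m\<in>G. f m * g m)"
    by (rule sum.mono_neutral_right) (use assms in auto)
  finally show ?thesis .
qed

lemma L1_rec0:
  assumes "p > 0" "finite {m. ipow (L1 p a) k i m \<noteq> 0}"
  shows "ipow (L1 p a) (Suc k) i j = ipow (L1 p a) k i (Suc j) * a j
          + (if p \<le> j then ipow (L1 p a) k i (j - p) else 0)"
proof -
  have "ipow (L1 p a) (Suc k) i j = (\<Sum>m\<in>{Suc j, j - p}. ipow (L1 p a) k i m * L1 p a m j)"
    unfolding ipow.simps imult_def
    by (rule sum_supp[OF assms(2)]) (auto simp: L1_def)
  also have "\<dots> = ipow (L1 p a) k i (Suc j) * a j
          + (if p \<le> j then ipow (L1 p a) k i (j - p) else 0)"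
    using assms(1) by (auto simp: L1_def)
  finally show ?thesis .
qed

lemma L1_fin:
  assumes "p > 0"
  shows "finite {m. ipow (L1 p a) k i m \<noteq> 0}"
proof (induction k)
  case 0
  then show ?case by (simp add: iid_def)
next
  case (Suc k)
  let ?F = "{m. ipow (L1 p a) k i m \<noteq> 0}"
  have "{j. ipow (L1 p a) (Suc k) i j \<noteq> 0} \<subseteq> (\<lambda>m. m - 1) ` ?F \<union> (\<lambda>m. m + p) ` ?F"
  proof
    fix j assume "j \<in> {j. ipow (L1 p a) (Suc k) i j \<noteq> 0}"
    then have "ipow (L1 p a) k i (Suc j) * a j
          + (if p \<le> j then ipow (L1 p a) k i (j - p) else 0) \<noteq> 0"
      using L1_rec0[OF assms Suc] by simp
    then have "Suc j \<in> ?F \<or> (p \<le> j \<and> j - p \<in> ?F)"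
      by (auto split: if_splits)
    then show "j \<in> (\<lambda>m. m - 1) ` ?F \<union> (\<lambda>m. m + p) ` ?F"
    proof (elim disjE)
      assume "Suc j \<in> ?F" then show ?thesis by (intro UnI1 image_eqI[where x="Suc j"]) auto
    next
      assume "p \<le> j \<and> j - p \<in> ?F" then show ?thesis by (intro UnI2 image_eqI[where x="j - p"]) auto
    qed
  qed
  then show ?case using Suc by (auto intro: finite_subset)
qed

lemma L1_rec:
  assumes "p > 0"
  shows "ipow (L1 p a) (Suc k) i j = ipow (L1 p a) k i (Suc j) * a j
          + (if p \<le> j then ipow (L1 p a) k i (j - p) else 0)"
  using L1_rec0[OF assms L1_fin[OF assms]] .

lemma L2_rec0:
  assumes "p > 0" "finite {m. ipow (L2 p b) k i m \<noteq> 0}"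
  shows "ipow (L2 p b) (Suc k) i j = (if 0 < j then ipow (L2 p b) k i (j - 1) else 0)
          + ipow (L2 p b) k i (j + p) * b j"
proof -
  have "ipow (L2 p b) (Suc k) i j = (\<Sum>m\<in>{j - 1, j + p}. ipow (L2 p b) k i m * L2 p b m j)"
    unfolding ipow.simps imult_def
    by (rule sum_supp[OF assms(2)]) (auto simp: L2_def)
  also have "\<dots> = (if 0 < j then ipow (L2 p b) k i (j - 1) else 0)
          + ipow (L2 p b) k i (j + p) * b j"
    using assms(1) by (auto simp: L2_def)
  finally show ?thesis .
qed

lemma L2_fin:
  assumes "p > 0"
  shows "finite {m. ipow (L2 p b) k i m \<noteq> 0}"
proof (induction k)
  case 0
  then show ?case by (simp add: iid_def)
next
  case (Suc k)
  let ?F = "{m. ipow (L2 p b) k i m \<noteq> 0}"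
  have "{j. ipow (L2 p b) (Suc k) i j \<noteq> 0} \<subseteq> Suc ` ?F \<union> (\<lambda>m. m - p) ` ?F"
  proof
    fix j assume "j \<in> {j. ipow (L2 p b) (Suc k) i j \<noteq> 0}"
    then have "(if 0 < j then ipow (L2 p b) k i (j - 1) else 0)
          + ipow (L2 p b) k i (j + p) * b j \<noteq> 0"
      using L2_rec0[OF assms Suc] by simp
    then have "(0 < j \<and> j - 1 \<in> ?F) \<or> j + p \<in> ?F"
      by (auto split: if_splits)
    then show "j \<in> Suc ` ?F \<union> (\<lambda>m. m - p) ` ?F"
    proof (elim disjE)
      assume "0 < j \<and> j - 1 \<in> ?F" then show ?thesis by (intro UnI1 image_eqI[where x="j - 1"]) auto
    next
      assume "j + p \<in> ?F" then show ?thesis by (intro UnI2 image_eqI[where x="j + p"]) auto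
    qed
  qed
  then show ?case using Suc by (auto intro: finite_subset)
qed

lemma L2_rec:
  assumes "p > 0"
  shows "ipow (L2 p b) (Suc k) i j = (if 0 < j then ipow (L2 p b) k i (j - 1) else 0)
          + ipow (L2 p b) k i (j + p) * b j"
  using L2_rec0[OF assms L2_fin[OF assms]] .

lemma L1_lrec:
  assumes "p > 0"
  shows "ipow (L1 p a) (Suc k) i j = ipow (L1 p a) k (i + p) j
          + (if 0 < i then a (i - 1) * ipow (L1 p a) k (i - 1) j else 0)"
proof (induction k arbitrary: i j)
  case 0
  show ?case using assms by (auto simp: L1_rec iid_def)
next
  case (Suc k)
  let ?P = "ipow (L1 p a)"
  have "?P (Suc (Suc k)) i j = ?P (Suc k) i (Suc j) * a j + (if p \<le> j then ?P (Suc k) i (j - p) else 0)"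
    by (rule L1_rec[OF assms])
  also have "\<dots> = (?P k (i + p) (Suc j) + (if 0 < i then a (i - 1) * ?P k (i - 1) (Suc j) else 0)) * a j
     + (if p \<le> j then ?P k (i + p) (j - p) + (if 0 < i then a (i - 1) * ?P k (i - 1) (j - p) else 0) else 0)"
    by (simp only: Suc)
  also have "\<dots> = (?P k (i + p) (Suc j) * a j + (if p \<le> j then ?P k (i + p) (j - p) else 0))
     + (if 0 < i then a (i - 1) * (?P k (i - 1) (Suc j) * a j + (if p \<le> j then ?P k (i - 1) (j - p) else 0)) else 0)"
    by (auto simp: algebra_simps)
  also have "\<dots> = ?P (Suc k) (i + p) j + (if 0 < i then a (i - 1) * ?P (Suc k) (i - 1) j else 0)"
    by (simp only: L1_rec[OF assms])
  finally show ?case .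
qed

lemma prod_add: "(\<Prod>m<j+q. a m) = (\<Prod>m<j. a m) * (\<Prod>m<q. a (j+m :: nat))"
  by (induction q) (auto simp: algebra_simps)

lemma similarity:
  assumes "p > 0" "\<And>m. b m = (\<Prod>q<p. a (m + q))"
  shows "(\<Prod>m<j. a m) * ipow (L2 p b) k i j = (\<Prod>m<i. a m) * ipow (L1 p a) k j i"
proof (induction k arbitrary: i j)
  case 0
  then show ?case by (simp add: iid_def)
next
  case (Suc k)
  have d1: "(\<Prod>m<j. a m) = a (j - 1) * (\<Prod>m<j - 1. a m)" if "0 < j"
    using that by (cases j) auto
  have d2: "(\<Prod>m<j. a m) * b j = (\<Prod>m<j + p. a m)"
    using assms(2) prod_add[of a j p] by simp
  have "(\<Prod>m<j. a m) * ipow (L2 p b) (Suc k) i j =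
     (if 0 < j then a (j - 1) * ((\<Prod>m<j - 1. a m) * ipow (L2 p b) k i (j - 1)) else 0)
      + ((\<Prod>m<j. a m) * b j) * ipow (L2 p b) k i (j + p)"
    by (simp add: L2_rec[OF assms(1)] d1 algebra_simps)
  also have "\<dots> = (if 0 < j then a (j - 1) * ((\<Prod>m<i. a m) * ipow (L1 p a) k (j - 1) i) else 0)
      + (\<Prod>m<i. a m) * ipow (L1 p a) k (j + p) i"
    by (simp only: d2 Suc)
  also have "\<dots> = (\<Prod>m<i. a m) * ipow (L1 p a) (Suc k) j i"
    by (simp add: L1_lrec[OF assms(1)] algebra_simps)
  finally show ?case .
qed

lemma Q_supp:
  assumes "p > 0" "k < j"
  shows "ipow (L2 p b) k 0 j = 0"
  using assms(2)
proof (induction k arbitrary: j)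
  case 0 then show ?case by (simp add: iid_def)
next
  case (Suc k) then show ?case by (simp add: L2_rec[OF assms(1)])
qed

lemma Q_diag:
  assumes "p > 0"
  shows "ipow (L2 p b) k 0 k = 1"
proof (induction k)
  case 0 then show ?case by (simp add: iid_def)
next
  case (Suc k) then show ?case by (simp add: L2_rec[OF assms(1)] Q_supp[OF assms(1)])
qed

lemma Q_small:
  assumes "p > 0" "m \<le> p"
  shows "ipow (L2 p b) m 0 j = (if j = m then 1 else 0)"
  using assms(2)
proof (induction m arbitrary: j)
  case 0 then show ?case by (simp add: iid_def)
next
  case (Suc m) then show ?case by (auto simp: L2_rec[OF assms(1)])
qed

lemma Q_mid:
  assumes "p > 0" "r < p"
  shows "ipow (L2 p b) (Suc (p + r)) 0 j = (if j = Suc (p + r) then 1 else 0) + (if j = r then (\<Sum>i\<le>r. b i) else 0)"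
  using assms(2)
proof (induction r arbitrary: j)
  case 0 then show ?case using assms by (auto simp: L2_rec[OF assms(1)] Q_small)
next
  case (Suc r)
  have "ipow (L2 p b) (Suc (p + Suc r)) 0 j = (if 0 < j then ipow (L2 p b) (Suc (p + r)) 0 (j - 1) else 0)
          + ipow (L2 p b) (Suc (p + r)) 0 (j + p) * b j"
    by (simp add: L2_rec[OF assms(1)])
  also have "\<dots> = (if j = Suc (p + Suc r) then 1 else 0) + (if j = Suc r then (\<Sum>i\<le>Suc r. b i) else 0)"
    using Suc by auto
  finally show ?case .
qed

lemma S2_sum:
  assumes "p > 0" "1 \<le> l" "l \<le> p"
  shows "S2 p b l (l + p) = (\<Sum>i<l. b i)"
proof -
  have "l + p = Suc (p + (l - 1))" using assms by simp
  have e: "ipow (L2 p b) (l + p) = ipow (L2 p b) (p + l)" by (simp add: add.commute)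
  then have "S2 p b l (l + p) = (\<Sum>i\<le>l - 1. b i)"
    unfolding S2_def e using Q_mid[OF assms(1), of "l - 1" b "l - 1"] assms by simp
  also have "{..l - 1} = {..<l}" using assms by auto
  finally show ?thesis by simp
qed

lemma S2_b0:
  assumes "p > 0"
  shows "S2 p b 1 (p + 1) = b 0"
  using S2_sum[OF assms, of 1] assms by simp

lemma S_main:
  assumes "p > 0" "\<And>m. b m = (\<Prod>q<p. a (m + q))"
  shows "S1 p a l k = (\<Prod>m<l - 1. a m) * S2 p b l k"
  using similarity[OF assms, of "l - 1" k 0] unfolding S1_def S2_def by simp

lemma S_diag:
  assumes "p > 0" "\<And>m. b m = (\<Prod>q<p. a (m + q))"
  shows "S1 p a l (l - 1) = (\<Prod>m<l - 1. a m)"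
  using S_main[OF assms, of l "l - 1"] Q_diag[OF assms(1)] unfolding S2_def by simp


definition ld :: "real set \<Rightarrow> (real \<Rightarrow> complex) \<Rightarrow> complex \<Rightarrow> real \<Rightarrow> bool" where
  "ld S f g t \<longleftrightarrow> (f has_vector_derivative f t * g) (at t within S)"

lemma ld_mult:
  assumes "ld S f g t" "ld S h k t"
  shows "ld S (\<lambda>x. f x * h x) (g + k) t"
  using has_vector_derivative_mult[OF assms[unfolded ld_def]] unfolding ld_def
  by (rule has_vector_derivative_eq_rhs) (simp add: algebra_simps)

lemma ld_prod:
  assumes "finite I" "\<And>i. i \<in> I \<Longrightarrow> ld S (f i) (g i) t"
  shows "ld S (\<lambda>x. \<Prod>i\<in>I. f i x) (\<Sum>i\<in>I. g i) t"
  using assms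
proof (induction I rule: finite_induct)
  case empty
  then show ?case by (simp add: ld_def)
next
  case (insert x F)
  have "ld S (\<lambda>y. f x y * (\<Prod>i\<in>F. f i y)) (g x + (\<Sum>i\<in>F. g i)) t"
    by (rule ld_mult) (use insert in auto)
  then show ?case using insert by simp
qed

lemma ld_inv:
  assumes "ld S f g t" "f t \<noteq> 0"
  shows "ld S (\<lambda>x. inverse (f x)) (- g) t"
proof -
  have "((inverse \<circ> f) has_vector_derivative (f t * g) * (- (inverse (f t) ^ Suc (Suc 0)))) (at t within S)"
    by (rule field_vector_diff_chain_within[OF assms(1)[unfolded ld_def]])
       (rule DERIV_inverse[OF assms(2)])
  then show ?thesis unfolding ld_def o_def
    by (rule has_vector_derivative_eq_rhs) (use assms(2) in \<open>simp add: field_simps power2_eq_square\<close>)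
qed

lemma ld_exp:
  assumes "(F has_vector_derivative c) (at t within S)"
  shows "ld S (\<lambda>x. a0 * exp (F x)) c t"
proof -
  have "((exp \<circ> F) has_vector_derivative c * exp (F t)) (at t within S)"
    by (rule field_vector_diff_chain_within[OF assms]) (rule has_field_derivative_at_within[OF DERIV_exp])
  then have "((\<lambda>x. a0 * (exp \<circ> F) x) has_vector_derivative a0 * (c * exp (F t))) (at t within S)"
    by (rule has_vector_derivative_mult_right)
  then show ?thesis unfolding ld_def o_def
    by (rule has_vector_derivative_eq_rhs) (simp add: algebra_simps)
qed

lemma ld_transform:
  assumes "t \<in> S" "\<And>x. x \<in> S \<Longrightarrow> f x = h x" "ld S h g t"
  shows "ld S f g t"
  using assms unfolding ld_def
  by (metis has_vector_derivative_transform)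

lemma tdom_sub:
  assumes "t \<in> tdom T"
  shows "{0..t} \<subseteq> tdom T"
  using assms unfolding tdom_def by auto (meson ereal_less_eq(3) le_less_trans)

lemma int_deriv:
  fixes f :: "real \<Rightarrow> complex"
  assumes "t \<in> tdom T" "continuous_on (tdom T) f"
  shows "((\<lambda>u. integral {0..u} f) has_vector_derivative f t) (at t within tdom T)"
proof -
  from assms(1) have "ereal t < T" "0 \<le> t" by (auto simp: tdom_def)
  then obtain c where c: "t < c" "ereal c < T" using ereal_dense2 by (metis ereal_less(2) ereal_dense2 less_ereal.simps(1))
  have "{0..c} \<subseteq> tdom T" using c by (auto simp: tdom_def) (meson ereal_less_eq(3) le_less_trans)
  then have cc: "continuous_on {0..c} f" using assms(2) continuous_on_subset by blast
  then have "((\<lambda>u. integral {0..u} f) has_vector_derivative f t) (at t within {0..c})"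
    using integral_has_vector_derivative[OF cc, of t] c \<open>0 \<le> t\<close> by auto
  moreover have "at t within tdom T = at t within {0..c}"
    by (rule at_within_nhd[where S="{..<c}"]) (use c in \<open>auto simp: tdom_def intro: le_less_trans[of _ "ereal c"]\<close>)
  ultimately show ?thesis by simp
qed

lemma b_cont:
  assumes "\<And>t. t \<in> S \<Longrightarrow> (f has_vector_derivative f' t) (at t within S)"
  shows "continuous_on S f"
  using assms continuous_on_eq_continuous_within has_vector_derivative_continuous by blast


lemma P1: "(\<Prod>j=1..p. f (i + j)) = (\<Prod>q<p. f (i + 1 + q) :: complex)" for p i :: nat
  by (induction p) (auto simp: prod.cl_ivl_Suc)

lemma P2:
  assumes "p \<ge> 1"
  shows "(\<Prod>m=1..p. ext0 a (int n - int m)) = ext0 (\<lambda>k. \<Prod>q<p. a (k+q)) (int n - int p)"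
proof (cases "p \<le> n")
  case True
  have "(\<Prod>m=1..p. ext0 a (int n - int m)) = (\<Prod>m=1..p. a (n - m))"
    by (rule prod.cong) (use True in \<open>auto simp: ext0_def nat_diff_distrib\<close>)
  also have "\<dots> = (\<Prod>q<p. a (n - p + q))"
    by (rule prod.reindex_bij_witness[where i="\<lambda>q. p - q" and j="\<lambda>m. p - m"]) (use True in auto)
  finally show ?thesis using True by (simp add: ext0_def nat_diff_distrib)
next
  case False
  have "(\<Prod>m=1..p. ext0 a (int n - int m)) = 0"
    by (rule prod_zero) (use False assms in \<open>auto simp: ext0_def intro!: bexI[where x=p]\<close>)
  then show ?thesis using False by (simp add: ext0_def)
qed

lemma S1: "(\<Sum>q<p. f (Suc q)) = (\<Sum>j=1..p. f j :: complex)"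
  by (induction p) (auto simp: sum.cl_ivl_Suc)

lemma S2rev: "(\<Sum>q<p. g (int q - int p)) = (\<Sum>j=1..p. g (- int j) :: complex)"
  by (rule sum.reindex_bij_witness[where i="\<lambda>j. p - j" and j="\<lambda>q. p - q"]) (auto simp: of_nat_diff)

lemma R1: "(\<Sum>j=1..q. f (m + q + 1 - j)) = (\<Sum>j=1..q. f (m + j) :: complex)" for m q :: nat
  by (rule sum.reindex_bij_witness[where i="\<lambda>j. q + 1 - j" and j="\<lambda>j. q + 1 - j"]) auto

lemma dir_alg:
  "(\<Sum>q<p. (bb (i + q + 1) - B (int (i + q) - int p))) =
     (\<Sum>j=1..p. bb (i + j)) - (\<Sum>j=1..p. B (int i - int j) :: complex)"
proof -
  have "(\<Sum>q<p. bb (i + q + 1)) = (\<Sum>j=1..p. bb (i + j))"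
    using S1[of "\<lambda>j. bb (i + j)" p] by simp
  moreover have "(\<Sum>q<p. B (int (i + q) - int p)) = (\<Sum>j=1..p. B (int i - int j))"
    using S2rev[of "\<lambda>x. B (int i + x)" p] by (simp add: algebra_simps)
  ultimately show ?thesis by (simp add: sum_subtractf)
qed

lemma conv_alg:
  fixes bb :: "nat \<Rightarrow> complex" and B :: "int \<Rightarrow> complex"
  assumes "p = Suc q" "i = m + q"
  shows "((\<Sum>j=1..p. bb (m + j)) - (\<Sum>j=1..p. B (int m - int j)))
     + - (\<Sum>j=1..q. (bb (i - j + 1) - B (int (i - j) - int p))) = bb (i + 1) - B (int i - int p)"
proof -
  have a: "(\<Sum>j=1..p. bb (m + j)) = (\<Sum>j=1..q. bb (m + j)) + bb (i + 1)"
    using assms by (simp add: sum.cl_ivl_Suc)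
  have b: "(\<Sum>j=1..q. bb (i - j + 1)) = (\<Sum>j=1..q. bb (m + j))"
  proof -
    have "(\<Sum>j=1..q. bb (i - j + 1)) = (\<Sum>j=1..q. bb (m + q + 1 - j))"
      by (rule sum.cong) (use assms in \<open>auto simp: Suc_diff_le\<close>)
    then show ?thesis using R1 by simp
  qed
  have c: "(\<Sum>j=1..p. B (int m - int j)) = B (int i - int p) + (\<Sum>j=1..q. B (int m - int j - 1))"
  proof -
    have e: "{1..p} = insert 1 {Suc 1..Suc q}" using assms by auto
    have "(\<Sum>j=1..p. B (int m - int j)) = B (int m - 1) + (\<Sum>j\<in>{Suc 1..Suc q}. B (int m - int j))"
      unfolding e by simp
    also have "(\<Sum>j\<in>{Suc 1..Suc q}. B (int m - int j)) = (\<Sum>j=1..q. B (int m - int j - 1))"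
      by (simp only: sum.shift_bounds_cl_Suc_ivl) (simp add: algebra_simps)
    finally show ?thesis using assms by (simp add: algebra_simps)
  qed
  have d: "(\<Sum>j=1..q. B (int (i - j) - int p)) = (\<Sum>j=1..q. B (int m - int j - 1))"
    by (rule sum.cong[OF refl], rule arg_cong[where f=B]) (use assms in auto)
  show ?thesis unfolding a c sum_subtractf b d by simp
qed


lemma direct:
  assumes p2: "p \<ge> 2" and asol: "a_solution p T a" and anz: "nonzero_linf T a"
    and bd: "\<forall>i t. b i t = (\<Prod>j<p. a (i + j) t)"
  shows "b_solution p T b \<and>
        (\<forall>t\<in>tdom T. \<forall>l\<in>{1..p}. \<forall>k.
           S1 p (\<lambda>i. a i t) l k / S1 p (\<lambda>i. a i t) l (l - 1) = S2 p (\<lambda>i. b i t) l k)"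
proof -
  have p0: "p > 0" "p \<ge> 1" using p2 by auto
  have bfun: "\<And>t. (\<lambda>k. \<Prod>q<p. a (k + q) t) = (\<lambda>k. b k t)" using bd by auto
  have lda: "ld (tdom T) (a n) (b (n + 1) t - ext0 (\<lambda>k. b k t) (int n - int p)) t"
    if t: "t \<in> tdom T" for n t
  proof -
    have "(a n has_vector_derivative
        a n t * ((\<Prod>j=1..p. a (n + j) t) - (\<Prod>j=1..p. ext0 (\<lambda>k. a k t) (int n - int j))))
     (at t within tdom T)" using asol t unfolding a_solution_def by blast
    moreover have "(\<Prod>j=1..p. a (n + j) t) = b (n + 1) t"
      using P1[of "\<lambda>k. a k t" n p] bd by simp
    moreover have "(\<Prod>j=1..p. ext0 (\<lambda>k. a k t) (int n - int j)) = ext0 (\<lambda>k. b k t) (int n - int p)"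
      using P2[OF p0(2), of "\<lambda>k. a k t" n] bfun[of t] by simp
    ultimately show ?thesis unfolding ld_def by simp
  qed
  have bsol: "b_solution p T b"
    unfolding b_solution_def
  proof (intro allI ballI)
    fix i t assume t: "t \<in> tdom T"
    have "ld (tdom T) (\<lambda>x. \<Prod>q<p. a (i + q) x)
        (\<Sum>q<p. (b (i + q + 1) t - ext0 (\<lambda>k. b k t) (int (i + q) - int p))) t"
      by (rule ld_prod, simp, rule lda[OF t])
    moreover have "(\<lambda>x. \<Prod>q<p. a (i + q) x) = b i" using bd by auto
    ultimately have "ld (tdom T) (b i)
        (\<Sum>q<p. (b (i + q + 1) t - ext0 (\<lambda>k. b k t) (int (i + q) - int p))) t"
      by (simp only:)
    then have "ld (tdom T) (b i) ((\<Sum>j=1..p. b (i + j) t) - (\<Sum>j=1..p. ext0 (\<lambda>k. b k t) (int i - int j))) t"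
      using dir_alg[where bb="\<lambda>k. b k t" and B="ext0 (\<lambda>k. b k t)" and i=i and p=p] by (simp only:)
    then show "(b i has_vector_derivative
        b i t * ((\<Sum>j=1..p. b (i + j) t) - (\<Sum>j=1..p. ext0 (\<lambda>n. b n t) (int i - int j))))
     (at t within tdom T)" unfolding ld_def .
  qed
  have "S1 p (\<lambda>i. a i t) l k / S1 p (\<lambda>i. a i t) l (l - 1) = S2 p (\<lambda>i. b i t) l k"
    if t: "t \<in> tdom T" for t l k
  proof -
    have bm: "\<And>m. b m t = (\<Prod>q<p. a (m + q) t)" using bd by simp
    have nz: "(\<Prod>m<l - 1. a m t) \<noteq> 0" using anz t unfolding nonzero_linf_def by auto
    show ?thesis
      unfolding S_main[OF p0(1) bm, of l k] S_diag[OF p0(1) bm, of l] using nz by simp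
  qed
  then show ?thesis using bsol by blast
qed


lemma sum_shift0: "(\<Sum>i<Suc n. f i) = f 0 + (\<Sum>i<n. f (Suc i) :: complex)"
  by (induction n) auto

lemma converse:
  assumes p2: "p \<ge> 2" and bsol: "b_solution p T b" and bnz: "nonzero_linf T b"
    and a0nz: "\<forall>i\<le>p - 2. a0 i \<noteq> 0"
    and H1: "\<forall>i\<le>p - 2. \<forall>t\<in>tdom T. a i t = a0 i * exp (integral {0..t} (\<lambda>\<tau>. b (i + 1) \<tau>))"
    and H2: "\<forall>i\<ge>p - 1. \<forall>t\<in>tdom T. a i t = b (i + 1 - p) t / (\<Prod>j=1..p - 1. a (i - j) t)"
  shows "(\<forall>t\<in>tdom T. \<forall>k.
           S1 p (\<lambda>i. a i t) 1 k = S2 p (\<lambda>i. b i t) 1 k \<and>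
           (\<forall>l\<in>{2..p}. S1 p (\<lambda>i. a i t) l k =
              (\<Prod>i<l - 1. a0 i) *
              exp (integral {0..t} (\<lambda>\<tau>. S2 p (\<lambda>i. b i \<tau>) l (l + p) - S2 p (\<lambda>i. b i \<tau>) 1 (p + 1))) *
              S2 p (\<lambda>i. b i t) l k)) \<and>
        a_solution p T a"
proof -
  have p0: "p > 0" "p \<ge> 1" using p2 by auto
  have nz: "a i t \<noteq> 0" if t: "t \<in> tdom T" for i t
  proof (induction i rule: less_induct)
    case (less i)
    show ?case
    proof (cases "i \<le> p - 2")
      case True
      then show ?thesis using H1 a0nz t by simp
    next
      case False
      then have "i \<ge> p - 1" by simp
      moreover have "(\<Prod>j=1..p - 1. a (i - j) t) \<noteq> 0"
        using less False by (simp add: prod_zero_iff)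
      moreover have "b (i + 1 - p) t \<noteq> 0" using bnz t unfolding nonzero_linf_def by auto
      ultimately show ?thesis using H2 t by simp
    qed
  qed
  have bprod: "b k t = (\<Prod>q<p. a (k + q) t)" if t: "t \<in> tdom T" for k t
  proof -
    have pr: "(\<Prod>j=1..p - 1. a (k + p - 1 - j) t) = (\<Prod>q<p - 1. a (k + q) t)"
      by (rule prod.reindex_bij_witness[where i="\<lambda>q. p - 1 - q" and j="\<lambda>j. p - 1 - j"]) auto
    have "a (k + p - 1) t = b k t / (\<Prod>j=1..p - 1. a (k + p - 1 - j) t)"
    proof -
      have "a (k + p - 1) t = b (k + p - 1 + 1 - p) t / (\<Prod>j=1..p - 1. a (k + p - 1 - j) t)"
        using H2 t by (simp del: One_nat_def)
      moreover have "k + p - 1 + 1 - p = k" using p0 by simp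
      ultimately show ?thesis by simp
    qed
    then have e: "a (k + p - 1) t = b k t / (\<Prod>q<p - 1. a (k + q) t)" using pr by simp
    have "(\<Prod>q<p - 1. a (k + q) t) \<noteq> 0" using nz[OF t] by (simp add: prod_zero_iff)
    moreover have "(\<Prod>q<p. a (k + q) t) = (\<Prod>q<p - 1. a (k + q) t) * a (k + (p - 1)) t"
    proof -
      obtain r where r: "p = Suc r" using p0 by (cases p) auto
      show ?thesis unfolding r by simp
    qed
    ultimately show ?thesis using e p0 by (simp add: add.assoc)
  qed
  have bcont: "continuous_on (tdom T) (b i)" for i
    by (rule b_cont[where f'="\<lambda>t. b i t * ((\<Sum>j=1..p. b (i + j) t) - (\<Sum>j=1..p. ext0 (\<lambda>n. b n t) (int i - int j)))"])
      (use bsol in \<open>auto simp: b_solution_def\<close>)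
  have lda: "\<forall>t\<in>tdom T. ld (tdom T) (a i) (b (i + 1) t - ext0 (\<lambda>k. b k t) (int i - int p)) t" for i
  proof (induction i rule: less_induct)
    case (less i)
    show ?case
    proof (intro ballI)
      fix t assume t: "t \<in> tdom T"
      show "ld (tdom T) (a i) (b (i + 1) t - ext0 (\<lambda>k. b k t) (int i - int p)) t"
      proof (cases "i \<le> p - 2")
        case True
        have "ext0 (\<lambda>k. b k t) (int i - int p) = 0" using True p2 by (simp add: ext0_def)
        moreover have "ld (tdom T) (a i) (b (i + 1) t) t"
          by (rule ld_transform[OF t, where h="\<lambda>x. a0 i * exp (integral {0..x} (\<lambda>\<tau>. b (i + 1) \<tau>))"])
             (use H1 True in simp, rule ld_exp, rule int_deriv[OF t bcont])
        ultimately show ?thesis by simp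
      next
        case False
        define q where "q = p - 1"
        define m where "m = i + 1 - p"
        have pq: "p = Suc q" and im: "i = m + q" using False p2 by (auto simp: q_def m_def)
        have ldb: "ld (tdom T) (b m) ((\<Sum>j=1..p. b (m + j) t) - (\<Sum>j=1..p. ext0 (\<lambda>n. b n t) (int m - int j))) t"
          using bsol t unfolding b_solution_def ld_def by blast
        have ldp: "ld (tdom T) (\<lambda>x. \<Prod>j=1..q. a (i - j) x)
           (\<Sum>j=1..q. (b (i - j + 1) t - ext0 (\<lambda>k. b k t) (int (i - j) - int p))) t"
        proof (rule ld_prod)
          fix j assume "j \<in> {1..q}"
          then have "i - j < i" using im by auto
          then show "ld (tdom T) (a (i - j)) (b (i - j + 1) t - ext0 (\<lambda>k. b k t) (int (i - j) - int p)) t"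
            using less t by blast
        qed simp
        have ldi: "ld (tdom T) (\<lambda>x. inverse (\<Prod>j=1..q. a (i - j) x))
           (- (\<Sum>j=1..q. (b (i - j + 1) t - ext0 (\<lambda>k. b k t) (int (i - j) - int p)))) t"
          by (rule ld_inv[OF ldp]) (use nz[OF t] in \<open>simp add: prod_zero_iff\<close>)
        have "ld (tdom T) (\<lambda>x. b m x * inverse (\<Prod>j=1..q. a (i - j) x))
           (((\<Sum>j=1..p. b (m + j) t) - (\<Sum>j=1..p. ext0 (\<lambda>n. b n t) (int m - int j))) +
            - (\<Sum>j=1..q. (b (i - j + 1) t - ext0 (\<lambda>k. b k t) (int (i - j) - int p)))) t"
          by (rule ld_mult[OF ldb ldi])
        then have "ld (tdom T) (\<lambda>x. b m x * inverse (\<Prod>j=1..q. a (i - j) x))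
           (b (i + 1) t - ext0 (\<lambda>k. b k t) (int i - int p)) t"
          using conv_alg[OF pq im, where bb="\<lambda>k. b k t" and B="ext0 (\<lambda>k. b k t)"] by (simp only:)
        then show ?thesis
          by (rule ld_transform[OF t, rotated])
             (use H2 False in \<open>simp add: divide_inverse q_def m_def\<close>)
      qed
    qed
  qed
  have asol: "a_solution p T a"
    unfolding a_solution_def
  proof (intro allI ballI)
    fix i t assume t: "t \<in> tdom T"
    have bf: "(\<lambda>k. \<Prod>q<p. a (k + q) t) = (\<lambda>k. b k t)" using bprod[OF t] by auto
    have "(\<Prod>j=1..p. a (i + j) t) = b (i + 1) t"
      using P1[of "\<lambda>k. a k t" i p] bprod[OF t] by simp
    moreover have "(\<Prod>j=1..p. ext0 (\<lambda>k. a k t) (int i - int j)) = ext0 (\<lambda>k. b k t) (int i - int p)"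
      using P2[OF p0(2), of "\<lambda>k. a k t" i] bf by simp
    ultimately show "(a i has_vector_derivative
        a i t * ((\<Prod>j=1..p. a (i + j) t) - (\<Prod>j=1..p. ext0 (\<lambda>n. a n t) (int i - int j))))
     (at t within tdom T)" using lda[of i] t unfolding ld_def by simp
  qed
  have S: "S1 p (\<lambda>i. a i t) 1 k = S2 p (\<lambda>i. b i t) 1 k \<and>
           (\<forall>l\<in>{2..p}. S1 p (\<lambda>i. a i t) l k =
              (\<Prod>i<l - 1. a0 i) *
              exp (integral {0..t} (\<lambda>\<tau>. S2 p (\<lambda>i. b i \<tau>) l (l + p) - S2 p (\<lambda>i. b i \<tau>) 1 (p + 1))) *
              S2 p (\<lambda>i. b i t) l k)" if t: "t \<in> tdom T" for t k
  proof
    have bm: "\<And>m. b m t = (\<Prod>q<p. a (m + q) t)" using bprod[OF t] by simp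
    show "S1 p (\<lambda>i. a i t) 1 k = S2 p (\<lambda>i. b i t) 1 k"
      using S_main[OF p0(1) bm, of 1 k] by simp
    show "\<forall>l\<in>{2..p}. S1 p (\<lambda>i. a i t) l k =
              (\<Prod>i<l - 1. a0 i) *
              exp (integral {0..t} (\<lambda>\<tau>. S2 p (\<lambda>i. b i \<tau>) l (l + p) - S2 p (\<lambda>i. b i \<tau>) 1 (p + 1))) *
              S2 p (\<lambda>i. b i t) l k"
    proof
      fix l assume l: "l \<in> {2..p}"
      have ig: "(\<lambda>\<tau>. S2 p (\<lambda>i. b i \<tau>) l (l + p) - S2 p (\<lambda>i. b i \<tau>) 1 (p + 1))
           = (\<lambda>\<tau>. \<Sum>m<l - 1. b (m + 1) \<tau>)"
      proof
        fix \<tau>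
        have "S2 p (\<lambda>i. b i \<tau>) l (l + p) = (\<Sum>i<Suc (l - 1). b i \<tau>)"
          using S2_sum[OF p0(1), of l "\<lambda>i. b i \<tau>"] l by simp
        then show "S2 p (\<lambda>i. b i \<tau>) l (l + p) - S2 p (\<lambda>i. b i \<tau>) 1 (p + 1) = (\<Sum>m<l - 1. b (m + 1) \<tau>)"
          unfolding S2_b0[OF p0(1)] sum_shift0 by simp
      qed
      have cont: "continuous_on {0..t} (b i)" for i
        using bcont continuous_on_subset tdom_sub[OF t] by blast
      have "integral {0..t} (\<lambda>\<tau>. \<Sum>m<l - 1. b (m + 1) \<tau>) = (\<Sum>m<l - 1. integral {0..t} (b (m + 1)))"
        by (rule integral_sum) (auto intro: integrable_continuous_interval cont)
      then have ex: "exp (integral {0..t} (\<lambda>\<tau>. S2 p (\<lambda>i. b i \<tau>) l (l + p) - S2 p (\<lambda>i. b i \<tau>) 1 (p + 1)))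
          = (\<Prod>m<l - 1. exp (integral {0..t} (b (m + 1))))"
        unfolding ig by (simp add: exp_sum)
      have "(\<Prod>m<l - 1. a m t) = (\<Prod>m<l - 1. a0 m * exp (integral {0..t} (b (m + 1))))"
        by (rule prod.cong) (use H1 t l in auto)
      also have "\<dots> = (\<Prod>i<l - 1. a0 i) * (\<Prod>m<l - 1. exp (integral {0..t} (b (m + 1))))"
        by (rule prod.distrib)
      finally show "S1 p (\<lambda>i. a i t) l k =
              (\<Prod>i<l - 1. a0 i) *
              exp (integral {0..t} (\<lambda>\<tau>. S2 p (\<lambda>i. b i \<tau>) l (l + p) - S2 p (\<lambda>i. b i \<tau>) 1 (p + 1))) *
              S2 p (\<lambda>i. b i t) l k"
        unfolding ex S_main[OF p0(1) bm, of l k] by simp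
    qed
  qed
  show ?thesis using S asol by blast
qed


theorem theorem3:
  fixes p :: nat and T :: ereal
  assumes "p \<ge> 2" and "T > 0"
  shows
   "(\<forall>a b. a_solution p T a \<and> nonzero_linf T a \<and>
        (\<forall>i t. b i t = (\<Prod>j<p. a (i + j) t)) \<longrightarrow>
        b_solution p T b \<and>
        (\<forall>t\<in>tdom T. \<forall>l\<in>{1..p}. \<forall>k.
           S1 p (\<lambda>i. a i t) l k / S1 p (\<lambda>i. a i t) l (l - 1) = S2 p (\<lambda>i. b i t) l k))
    \<and>
    (\<forall>b a0 a. b_solution p T b \<and> nonzero_linf T b \<and>
        (\<forall>i\<le>p - 2. a0 i \<noteq> 0) \<and>
        (\<forall>i\<le>p - 2. \<forall>t\<in>tdom T. a i t = a0 i * exp (integral {0..t} (\<lambda>\<tau>. b (i + 1) \<tau>))) \<and>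
        (\<forall>i\<ge>p - 1. \<forall>t\<in>tdom T.
            a i t = b (i + 1 - p) t / (\<Prod>j=1..p - 1. a (i - j) t)) \<longrightarrow>
        (\<forall>t\<in>tdom T. \<forall>k.
           S1 p (\<lambda>i. a i t) 1 k = S2 p (\<lambda>i. b i t) 1 k \<and>
           (\<forall>l\<in>{2..p}. S1 p (\<lambda>i. a i t) l k =
              (\<Prod>i<l - 1. a0 i) *
              exp (integral {0..t} (\<lambda>\<tau>. S2 p (\<lambda>i. b i \<tau>) l (l + p) - S2 p (\<lambda>i. b i \<tau>) 1 (p + 1))) *
              S2 p (\<lambda>i. b i t) l k)) \<and>
        a_solution p T a)"
  using direct[OF assms(1)] converse[OF assms(1)] by blast

end
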